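(* For each integer $n\ge1$, let $V_n=\{a_1,\dots,a_{n+1}\}$ consist of $n+1$ pairwise different letters and $L_{9,n}=\{a_1\}^+\{a_2\}^+\cdots\{a_{n+1}\}^+$. Then $L_{9,n}\in\mathrm{SLT}_2\setminus\mathrm{RL}_n^V$.
   Context: Strictly locally testable languages: let $V$ be an alphabet and $k\ge1$. For $B,I,E\subseteq V^k$ and $F\subseteq V^{\le k-1}$, $\mathrm{slt}(B,I,E,F)$ is the language over $V$ consisting of all words in $F$ together with all words $a_1\cdots a_n$ ($a_i\in V$, $n\ge k$) with $a_1\cdots a_k\in B$, $a_{j+1}\cdots a_{j+k}\in I$ for all $1\le j\le n-k-1$, and $a_{n-k+1}\cdots a_n\in E$. $\mathrm{SLT}_k$ is the family of languages of this form. A right-linear grammar is $G=(N,T,P,S)$ with rules $A\to wB$ or $A\to w$ ($A,B\in N$, $w\in T^*$). For a regular language $L$, $\mathrm{Var}_{RL}(L)$ is the minimum of $|N|$ over all right-linear grammars generating $L$; $\mathrm{RL}_n^V=\{L\text{ regular}:\mathrm{Var}_{RL}(L)\le n\}$. *)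

theory Defs
  imports Main
begin

definition kwords :: "'a set \<Rightarrow> nat \<Rightarrow> 'a list set" where
  "kwords V k = {w. set w \<subseteq> V \<and> length w = k}"

(* slt(B,I,E,F) over V, with 0-based indexing: the factor a_{j+1}..a_{j+k}
   of the paper is take k (drop j w). *)
definition slt :: "'a set \<Rightarrow> nat \<Rightarrow> 'a list set \<Rightarrow> 'a list set \<Rightarrow> 'a list set
                   \<Rightarrow> 'a list set \<Rightarrow> 'a list set" where
  "slt V k B I E F = F \<union>
     {w. set w \<subseteq> V \<and> length w \<ge> k \<and> take k w \<in> B
         \<and> (\<forall>j. 1 \<le> j \<and> j \<le> length w - k - 1 \<longrightarrow> take k (drop j w) \<in> I)
         \<and> drop (length w - k) w \<in> E}"

definition SLT :: "'a set \<Rightarrow> nat \<Rightarrow> 'a list set set" where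
  "SLT V k = {L. \<exists>B I E F. B \<subseteq> kwords V k \<and> I \<subseteq> kwords V k \<and> E \<subseteq> kwords V k
                  \<and> F \<subseteq> {w. set w \<subseteq> V \<and> length w \<le> k - 1}
                  \<and> L = slt V k B I E F}"

(* Right-linear grammars with nonterminals from nat (any finite nonterminal set can be renamed).
   A production (A, w, Some B) is A -> wB, a production (A, w, None) is A -> w. *)
definition rlg :: "nat set \<Rightarrow> 'a set \<Rightarrow> (nat \<times> 'a list \<times> nat option) set \<Rightarrow> nat \<Rightarrow> bool" where
  "rlg N T P S \<longleftrightarrow> finite N \<and> finite T \<and> finite P \<and> S \<in> N \<and>
     (\<forall>(A, w, r) \<in> P. A \<in> N \<and> set w \<subseteq> T \<and> (\<forall>B. r = Some B \<longrightarrow> B \<in> N))"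

inductive derives :: "(nat \<times> 'a list \<times> nat option) set \<Rightarrow> nat \<Rightarrow> 'a list \<Rightarrow> bool"
  for P where
  term_rule: "(A, w, None) \<in> P \<Longrightarrow> derives P A w"
| step_rule: "(A, u, Some B) \<in> P \<Longrightarrow> derives P B v \<Longrightarrow> derives P A (u @ v)"

definition rl_lang :: "(nat \<times> 'a list \<times> nat option) set \<Rightarrow> nat \<Rightarrow> 'a list set" where
  "rl_lang P S = {w. derives P S w}"

(* RL_n^V: languages generated by a right-linear grammar with at most n nonterminals,
   i.e. Var_RL(L) <= n (such languages are automatically regular). *)
definition RL_Var :: "nat \<Rightarrow> 'a list set set" where
  "RL_Var n = {L. \<exists>N T P S. rlg N T P S \<and> card N \<le> n \<and> rl_lang P S = L}"

definition L9 :: "(nat \<Rightarrow> 'a) \<Rightarrow> nat \<Rightarrow> 'a list set" where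
  "L9 a n = {concat (map (\<lambda>i. replicate (k i) (a i)) [1..<n+2]) | k.
               \<forall>i\<in>{1..n+1}. k i \<ge> 1}"

end

theory Submission
  imports Defs
begin

definition stp :: "nat \<Rightarrow> nat \<Rightarrow> bool" where "stp x y \<longleftrightarrow> y = x \<or> y = Suc x"

abbreviation blk :: "(nat \<Rightarrow> nat) \<Rightarrow> nat \<Rightarrow> nat \<Rightarrow> nat list" where
  "blk k l r \<equiv> concat (map (\<lambda>i. replicate (k i) i) [l..<Suc r])"

lemma succ_rep: "successively stp (replicate m x)"
  by (induction m) (auto simp: successively_Cons stp_def)

lemma succ_rep2: "successively stp (x # replicate m x)"
  using succ_rep[of "Suc m" x] by simp

lemma app_lem:
  assumes "ys \<noteq> []" "hd ys = l" "last ys = r" "successively stp ys"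
  shows "ys @ replicate (Suc m) (Suc r) \<noteq> [] \<and> hd (ys @ replicate (Suc m) (Suc r)) = l
     \<and> last (ys @ replicate (Suc m) (Suc r)) = Suc r \<and> successively stp (ys @ replicate (Suc m) (Suc r))"
  using assms succ_rep[of "Suc m" "Suc r"]
  by (auto simp: successively_append_iff stp_def simp del: replicate_Suc)

lemma idx_fwd:
  assumes "l \<le> r" "\<forall>i\<in>{l..r}. 1 \<le> k i"
  shows "blk k l r \<noteq> [] \<and> hd (blk k l r) = l \<and> last (blk k l r) = r \<and> successively stp (blk k l r)"
  using assms
proof (induction r)
  case 0
  then show ?case by (cases "k 0") (auto simp: succ_rep succ_rep2)
next
  case (Suc r)
  show ?case
  proof (cases "l = Suc r")
    case True
    then show ?thesis using Suc.prems by (cases "k (Suc r)") (auto simp: succ_rep succ_rep2)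
  next
    case False
    then have lr: "l \<le> r" using Suc.prems by auto
    obtain ys where ys: "ys = blk k l r" by simp
    have IH: "ys \<noteq> [] \<and> hd ys = l \<and> last ys = r \<and> successively stp ys"
      using Suc.IH lr Suc.prems ys by auto
    have kk: "k (Suc r) \<ge> 1" using Suc.prems by auto
    then obtain m where m: "k (Suc r) = Suc m" by (cases "k (Suc r)") auto
    have eq: "blk k l (Suc r) = ys @ replicate (Suc m) (Suc r)"
      using lr ys m by simp
    show ?thesis unfolding eq using IH app_lem by blast
  qed
qed

lemma idx_bwd:
  assumes "xs \<noteq> []" "successively stp xs"
  shows "\<exists>k. (\<forall>i\<in>{hd xs..last xs}. 1 \<le> k i) \<and> xs = blk k (hd xs) (last xs) \<and> hd xs \<le> last xs"
  using assms
proof (induction xs rule: rev_induct)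
  case Nil
  then show ?case by simp
next
  case (snoc x xs)
  show ?case
  proof (cases "xs = []")
    case True
    then show ?thesis by (intro exI[of _ "\<lambda>_. 1"]) auto
  next
    case False
    have s: "successively stp xs" "stp (last xs) x"
      using snoc.prems False by (auto simp: successively_append_iff)
    obtain k where k: "\<forall>i\<in>{hd xs..last xs}. 1 \<le> k i" "xs = blk k (hd xs) (last xs)" "hd xs \<le> last xs"
      using snoc.IH False s by blast
    show ?thesis
    proof (cases "x = last xs")
      case True
      define k' where "k' = k(x := Suc (k x))"
      have "blk k' (hd xs) (last xs) = blk k (hd xs) (last xs) @ [x]"
      proof -
        have "blk k' (hd xs) (last xs) = concat (map (\<lambda>i. replicate (k' i) i) [hd xs..<last xs]) @ replicate (k' (last xs)) (last xs)"
          using k(3) by simp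
        also have "concat (map (\<lambda>i. replicate (k' i) i) [hd xs..<last xs]) = concat (map (\<lambda>i. replicate (k i) i) [hd xs..<last xs])"
          by (rule arg_cong[where f=concat], rule map_cong) (auto simp: k'_def True)
        also have "replicate (k' (last xs)) (last xs) = replicate (k (last xs)) (last xs) @ [x]"
          using True by (simp add: k'_def replicate_append_same)
        also have "concat (map (\<lambda>i. replicate (k i) i) [hd xs..<last xs]) @ (replicate (k (last xs)) (last xs) @ [x]) = blk k (hd xs) (last xs) @ [x]"
          using k(3) by simp
        finally show ?thesis .
      qed
      then show ?thesis using k False True
        by (intro exI[of _ k']) (auto simp: k'_def)
    next
      case False2: False
      then have x: "x = Suc (last xs)" using s(2) by (auto simp: stp_def)
      define k' where "k' = k(x := 1)"
      have "blk k' (hd xs) x = blk k (hd xs) (last xs) @ [x]"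
      proof -
        have "blk k' (hd xs) x = blk k' (hd xs) (last xs) @ replicate (k' x) x"
          using k(3) x by simp
        also have "blk k' (hd xs) (last xs) = blk k (hd xs) (last xs)"
          by (rule arg_cong[where f=concat], rule map_cong) (auto simp: k'_def x)
        finally show ?thesis by (simp add: k'_def)
      qed
      then show ?thesis using k False x
        by (intro exI[of _ k']) (auto simp: k'_def)
    qed
  qed
qed

lemma map_blk: "map a (concat (map (\<lambda>i. replicate (k i) i) L)) = concat (map (\<lambda>i. replicate (k i) (a i)) L)"
  by (induction L) auto

lemma L9_char: "L9 a n = map a ` {xs. xs \<noteq> [] \<and> hd xs = 1 \<and> last xs = Suc n \<and> successively stp xs}"
proof
  show "L9 a n \<subseteq> map a ` {xs. xs \<noteq> [] \<and> hd xs = 1 \<and> last xs = Suc n \<and> successively stp xs}"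
  proof
    fix w assume "w \<in> L9 a n"
    then obtain k where k: "\<forall>i\<in>{1..n+1}. k i \<ge> 1" and w: "w = concat (map (\<lambda>i. replicate (k i) (a i)) [1..<n+2])"
      unfolding L9_def by blast
    have "w = map a (blk k 1 (Suc n))" using w by (simp only: map_blk) simp
    moreover have "blk k 1 (Suc n) \<noteq> [] \<and> hd (blk k 1 (Suc n)) = 1 \<and> last (blk k 1 (Suc n)) = Suc n \<and> successively stp (blk k 1 (Suc n))"
      using idx_fwd[of 1 "Suc n" k] k by auto
    ultimately show "w \<in> map a ` {xs. xs \<noteq> [] \<and> hd xs = 1 \<and> last xs = Suc n \<and> successively stp xs}" by blast
  qed
next
  show "map a ` {xs. xs \<noteq> [] \<and> hd xs = 1 \<and> last xs = Suc n \<and> successively stp xs} \<subseteq> L9 a n"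
  proof
    fix w assume "w \<in> map a ` {xs. xs \<noteq> [] \<and> hd xs = 1 \<and> last xs = Suc n \<and> successively stp xs}"
    then obtain xs where xs: "xs \<noteq> []" "hd xs = 1" "last xs = Suc n" "successively stp xs" and w: "w = map a xs" by blast
    obtain k where k: "\<forall>i\<in>{1..Suc n}. 1 \<le> k i" "xs = blk k 1 (Suc n)"
      using idx_bwd[OF xs(1,4)] xs(2,3) by auto
    have "w = concat (map (\<lambda>i. replicate (k i) (a i)) [1..<n+2])"
      using w k(2) by (simp only: map_blk) simp
    then show "w \<in> L9 a n" unfolding L9_def using k(1) by auto
  qed
qed

lemma good_sorted:
  assumes "xs \<noteq> []" "hd xs = 1" "last xs = Suc n" "successively stp xs"
  shows "sorted xs" "set xs \<subseteq> {1..Suc n}"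
proof -
  have "successively (\<le>) xs" using assms(4) by (rule successively_mono) (auto simp: stp_def)
  then show so: "sorted xs" by (simp add: successively_conv_sorted_wrt transp_on_le)
  show "set xs \<subseteq> {1..Suc n}"
  proof
    fix y assume "y \<in> set xs"
    then obtain i where i: "i < length xs" "y = xs ! i" by (auto simp: in_set_conv_nth)
    have "xs ! 0 \<le> xs ! i" "xs ! i \<le> xs ! (length xs - 1)"
      using so i by (auto intro: sorted_nth_mono)
    then show "y \<in> {1..Suc n}" using assms(1,2,3) i by (auto simp: hd_conv_nth last_conv_nth)
  qed
qed

inductive reach :: "(nat \<times> 'a list \<times> nat option) set \<Rightarrow> nat \<Rightarrow> 'a list \<Rightarrow> nat \<Rightarrow> bool" for P where
  rrefl: "reach P A [] A"
| rstep: "(A, u, Some B) \<in> P \<Longrightarrow> reach P B v X \<Longrightarrow> reach P A (u @ v) X"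

lemma reach_derives: "reach P A u X \<Longrightarrow> derives P X v \<Longrightarrow> derives P A (u @ v)"
  by (induction rule: reach.induct) (auto dest: step_rule)

lemma reach_N: "reach P A u X \<Longrightarrow> rlg N T P S \<Longrightarrow> A \<in> N \<Longrightarrow> X \<in> N"
  by (induction rule: reach.induct) (auto simp: rlg_def)

lemma cut:
  assumes "derives P A w" "\<forall>(B,u,r)\<in>P. length u \<le> ml" "ml < m" "s + m \<le> length w"
  shows "\<exists>p X. s \<le> p \<and> p < s + m \<and> reach P A (take p w) X \<and> derives P X (drop p w)"
  using assms
proof (induction arbitrary: s rule: derives.induct)
  case (term_rule A w)
  then show ?case by fastforce
next
  case (step_rule A u B v)
  have lu: "length u \<le> ml" using step_rule.prems(1) step_rule.hyps(1) by fastforce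
  show ?case
  proof (cases "s \<le> length u")
    case True
    have "reach P A (u @ []) B" by (rule rstep[OF step_rule.hyps(1) rrefl])
    then show ?thesis using True lu step_rule.prems step_rule.hyps(2)
      by (intro exI[of _ "length u"] exI[of _ B]) auto
  next
    case False
    have sm: "s - length u + m \<le> length v" using step_rule.prems False by auto
    have "\<exists>p X. s - length u \<le> p \<and> p < s - length u + m \<and> reach P B (take p v) X \<and> derives P X (drop p v)"
      using step_rule.IH[of "s - length u"] step_rule.prems(1,2) sm by blast
    then obtain p X where pX: "s - length u \<le> p" "p < s - length u + m" "reach P B (take p v) X" "derives P X (drop p v)"
      by blast
    have "reach P A (u @ take p v) X" by (rule rstep[OF step_rule.hyps(1) pX(3)])
    then show ?thesis using pX False
      by (intro exI[of _ "length u + p"] exI[of _ X]) auto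
  qed
qed

lemma blocks_nth:
  assumes "r < K * M"
  shows "concat (map (\<lambda>i. replicate M (f i)) [0..<K]) ! r = f (r div M)"
  using assms
proof (induction K)
  case 0 then show ?case by simp
next
  case (Suc K)
  have len: "length (concat (map (\<lambda>i. replicate M (f i)) [0..<K])) = K * M"
    by (induction K) auto
  show ?case
  proof (cases "r < K * M")
    case True then show ?thesis using Suc by (simp add: nth_append len)
  next
    case False
    then have "r div M = K" using Suc.prems
      by (metis add.commute div_nat_eqI mult.commute mult_Suc not_le)
    then show ?thesis using False Suc.prems by (simp add: nth_append len)
  qed
qed

lemma div_blk: "b * M \<le> r \<Longrightarrow> r < Suc b * M \<Longrightarrow> r div (M::nat) = b"
  by (rule div_nat_eqI) (simp_all add: mult.commute)

lemma not_RL: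
  fixes n :: nat and a :: "nat \<Rightarrow> 'a"
  assumes n1: "n \<ge> 1" and inj: "inj_on a {1..n+1}"
  shows "L9 a n \<notin> RL_Var n"
proof
  assume "L9 a n \<in> RL_Var n"
  then obtain N T P S where G: "rlg N T P S" "card N \<le> n" "rl_lang P S = L9 a n"
    unfolding RL_Var_def by blast
  have finP: "finite P" and finN: "finite N" and SN: "S \<in> N" using G(1) by (auto simp: rlg_def)
  define ml where "ml = Max ((\<lambda>(A, w, r). length w) ` P)"
  have mlb: "\<forall>(B,u,r)\<in>P. length u \<le> ml"
  proof (clarify)
    fix B u r assume "(B, u, r) \<in> P"
    then have "(\<lambda>(A, w, r). length w) (B, u, r) \<in> (\<lambda>(A, w, r). length w) ` P" by (rule imageI)
    then show "length u \<le> ml" unfolding ml_def using finP by (auto intro: Max_ge)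
  qed
  define M where "M = ml + 2"
  define w0 where "w0 = concat (map (\<lambda>i. replicate M (a (Suc i))) [0..<Suc n])"
  have lw0: "length w0 = Suc n * M" unfolding w0_def by (induction n) auto
  have w0nth: "w0 ! r = a (Suc (r div M))" if "r < Suc n * M" for r
    unfolding w0_def using blocks_nth[OF that, of "\<lambda>i. a (Suc i)"] by simp
  have "w0 = concat (map (\<lambda>i. replicate M (a i)) (map Suc [0..<Suc n]))"
    unfolding w0_def by (simp add: comp_def)
  also have "map Suc [0..<Suc n] = [1..<n+2]" by (simp add: map_Suc_upt)
  finally have eqw: "w0 = concat (map (\<lambda>i. replicate ((\<lambda>_. M) i) (a i)) [1..<n+2])" .
  have "w0 \<in> L9 a n" unfolding L9_def
    by (rule CollectI, rule exI[of _ "\<lambda>_. M"], rule conjI[OF eqw]) (simp add: M_def)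
  then have dw0: "derives P S w0" using G(3) by (auto simp: rl_lang_def)
  have "\<forall>b\<in>{0..n}. \<exists>pX. b * M + 1 \<le> fst pX \<and> fst pX < Suc b * M \<and> reach P S (take (fst pX) w0) (snd pX) \<and> derives P (snd pX) (drop (fst pX) w0)"
  proof
    fix b assume b: "b \<in> {0..n}"
    have e: "b * M + 1 + (ml + 1) = Suc b * M" by (simp add: M_def)
    have "Suc b * M \<le> Suc n * M" using b by (intro mult_le_mono1) auto
    then have "b * M + 1 + (ml + 1) \<le> length w0" unfolding e lw0 .
    from cut[OF dw0 mlb _ this] obtain p X where "b * M + 1 \<le> p" "p < b * M + 1 + (ml + 1)" "reach P S (take p w0) X" "derives P X (drop p w0)"
      by auto
    then show "\<exists>pX. b * M + 1 \<le> fst pX \<and> fst pX < Suc b * M \<and> reach P S (take (fst pX) w0) (snd pX) \<and> derives P (snd pX) (drop (fst pX) w0)"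
      by (intro exI[of _ "(p, X)"]) (auto simp: M_def)
  qed
  then obtain f where f: "\<forall>b\<in>{0..n}. b * M + 1 \<le> fst (f b) \<and> fst (f b) < Suc b * M \<and> reach P S (take (fst (f b)) w0) (snd (f b)) \<and> derives P (snd (f b)) (drop (fst (f b)) w0)"
    by (metis bchoice)
  have XN: "snd (f b) \<in> N" if "b \<in> {0..n}" for b
    using f that reach_N G(1) SN by blast
  have contra: False if bb: "b < b'" "b' \<le> n" "snd (f b) = snd (f b')" for b b'
  proof -
    define p where "p = fst (f b)"
    define q where "q = fst (f b')"
    define X where "X = snd (f b)"
    have "b \<in> {0..n}" "b' \<in> {0..n}" using bb by auto
    from bspec[OF f this(1)] bspec[OF f this(2)]
    have fb: "b * M + 1 \<le> p" "p < Suc b * M" "derives P X (drop p w0)"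
     and fb': "b' * M + 1 \<le> q" "q < Suc b' * M" "reach P S (take q w0) X"
      unfolding p_def X_def q_def bb(3) by auto
    have "Suc b * M \<le> b' * M" using bb by (intro mult_le_mono1) auto
    then have pq: "p < q" using fb fb' by linarith
    have "Suc b' * M \<le> Suc n * M" using bb by (intro mult_le_mono1) auto
    then have qlen: "q < length w0" using fb' lw0 by linarith
    define x where "x = take q w0 @ drop p w0"
    have "derives P S x" unfolding x_def by (rule reach_derives[OF fb'(3) fb(3)])
    then have "x \<in> L9 a n" using G(3) by (auto simp: rl_lang_def)
    then obtain xs where xs: "xs \<noteq> []" "hd xs = 1" "last xs = Suc n" "successively stp xs" and x: "x = map a xs"
      unfolding L9_char by blast
    have so: "sorted xs" and sx: "set xs \<subseteq> {1..Suc n}" using good_sorted[OF xs] by auto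
    have lx: "length x = q + (length w0 - p)" unfolding x_def using qlen pq by simp
    have q1: "q - 1 < length xs" "q < length xs" using lx x pq qlen by auto
    have "x ! (q - 1) = w0 ! (q - 1)" unfolding x_def using qlen fb' by (simp add: nth_append)
    also have "\<dots> = a (Suc b')"
    proof -
      have "(q - 1) div M = b'"
        using fb' by (intro div_blk) auto
      then show ?thesis using w0nth[of "q - 1"] qlen lw0 by simp
    qed
    finally have e1: "a (xs ! (q - 1)) = a (Suc b')" using x q1 by simp
    have "x ! q = w0 ! p" unfolding x_def using qlen pq by (simp add: nth_append)
    also have "\<dots> = a (Suc b)"
    proof -
      have "p div M = b"
        using fb by (intro div_blk) auto
      then show ?thesis using w0nth[of p] pq qlen lw0 by simp
    qed
    finally have e2: "a (xs ! q) = a (Suc b)" using x q1 by simp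
    have m1: "xs ! (q - 1) \<in> {1..n+1}" "xs ! q \<in> {1..n+1}" using sx q1 nth_mem by fastforce+
    have "xs ! (q - 1) = Suc b'" using inj_onD[OF inj e1] m1 bb by auto
    moreover have "xs ! q = Suc b" using inj_onD[OF inj e2] m1 bb by auto
    moreover have "xs ! (q - 1) \<le> xs ! q" using so q1 by (auto intro: sorted_nth_mono)
    ultimately show False using bb by simp
  qed
  have "\<not> inj_on (\<lambda>b. snd (f b)) {0..n}"
  proof
    assume "inj_on (\<lambda>b. snd (f b)) {0..n}"
    then have "card ((\<lambda>b. snd (f b)) ` {0..n}) = Suc n" by (simp add: card_image)
    moreover have "card ((\<lambda>b. snd (f b)) ` {0..n}) \<le> card N"
      using XN finN by (intro card_mono) auto
    ultimately show False using G(2) by simp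
  qed
  then obtain b b' where "b \<in> {0..n}" "b' \<in> {0..n}" "b \<noteq> b'" "snd (f b) = snd (f b')"
    unfolding inj_on_def by blast
  then show False using contra by (metis atLeastAtMost_iff linorder_neqE_nat)
qed

lemma take2_drop: "Suc j < length ys \<Longrightarrow> take 2 (drop j ys) = [ys ! j, ys ! Suc j]"
  by (simp add: Cons_nth_drop_Suc[symmetric] numeral_2_eq_2)

lemma is_SLT:
  fixes n :: nat and a :: "nat \<Rightarrow> 'a"
  assumes n1: "n \<ge> 1" and inj: "inj_on a {1..n+1}"
  shows "L9 a n \<in> SLT (a ` {1..n+1}) 2"
proof -
  define V where "V = a ` {1..n+1}"
  define I where "I = {[a i, a j] | i j. i \<in> {1..n+1} \<and> j \<in> {1..n+1} \<and> stp i j}"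
  define B where "B = {x \<in> I. hd x = a 1}"
  define E where "E = {x \<in> I. last x = a (Suc n)}"
  have IV: "I \<subseteq> kwords V 2" unfolding I_def kwords_def V_def by auto
  have pairI: "take 2 (drop j (map a xs)) \<in> I \<longleftrightarrow> stp (xs ! j) (xs ! Suc j)"
    if "set xs \<subseteq> {1..n+1}" "Suc j < length xs" for xs j
  proof -
    have m: "xs ! j \<in> {1..n+1}" "xs ! Suc j \<in> {1..n+1}" using that nth_mem by (metis Suc_lessD subsetD)+
    have "take 2 (drop j (map a xs)) = [a (xs ! j), a (xs ! Suc j)]" using take2_drop[of j "map a xs"] that by simp
    moreover have "[a (xs ! j), a (xs ! Suc j)] \<in> I \<longleftrightarrow> stp (xs ! j) (xs ! Suc j)"
    proof
      assume "[a (xs ! j), a (xs ! Suc j)] \<in> I"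
      then obtain i i' where ii: "i \<in> {1..n+1}" "i' \<in> {1..n+1}" "stp i i'" "a (xs ! j) = a i" "a (xs ! Suc j) = a i'"
        unfolding I_def by blast
      have "xs ! j = i" using inj_onD[OF inj ii(4) m(1) ii(1)] .
      moreover have "xs ! Suc j = i'" using inj_onD[OF inj ii(5) m(2) ii(2)] .
      ultimately show "stp (xs ! j) (xs ! Suc j)" using ii(3) by simp
    next
      assume "stp (xs ! j) (xs ! Suc j)"
      then show "[a (xs ! j), a (xs ! Suc j)] \<in> I" unfolding I_def using m by blast
    qed
    ultimately show ?thesis by simp
  qed
  have hdeq: "hd (map a xs) = a c \<longleftrightarrow> hd xs = c" if "set xs \<subseteq> {1..n+1}" "xs \<noteq> []" "c \<in> {1..n+1}" for xs c
  proof -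
    have "hd xs \<in> {1..n+1}" using that hd_in_set by blast
    then show ?thesis using that inj_onD[OF inj, of "hd xs" c] by (auto simp: hd_map)
  qed
  have lasteq: "last (map a xs) = a c \<longleftrightarrow> last xs = c" if "set xs \<subseteq> {1..n+1}" "xs \<noteq> []" "c \<in> {1..n+1}" for xs c
  proof -
    have "last xs \<in> {1..n+1}" using that last_in_set by blast
    then show ?thesis using that inj_onD[OF inj, of "last xs" c] by (auto simp: last_map)
  qed
  have eqL: "L9 a n = slt V 2 B I E {}"
  proof
    show "L9 a n \<subseteq> slt V 2 B I E {}"
    proof
      fix w assume "w \<in> L9 a n"
      then obtain xs where xs: "xs \<noteq> []" "hd xs = 1" "last xs = Suc n" "successively stp xs" and w: "w = map a xs"
        unfolding L9_char by blast
      have sx: "set xs \<subseteq> {1..n+1}" using good_sorted[OF xs] by simp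
      have len: "length xs \<ge> 2"
      proof (rule ccontr)
        assume "\<not> length xs \<ge> 2"
        moreover have "length xs \<noteq> 0" using xs(1) by simp
        ultimately have "length xs = Suc 0" by linarith
        then obtain y where "xs = [y]" by (auto simp: length_Suc_conv)
        then show False using xs n1 by simp
      qed
      have allI': "take 2 (drop j w) \<in> I" if "Suc j < length xs" for j
        using pairI[OF sx that] successively_nth[OF xs(4) that] w by simp
      have "take 2 w \<in> B"
      proof -
        have "take 2 w \<in> I" using allI'[of 0] len by simp
        moreover have "hd (take 2 w) = a 1" using len w xs hdeq[OF sx xs(1), of 1] by simp
        ultimately show ?thesis unfolding B_def by simp
      qed
      moreover have "drop (length w - 2) w \<in> E"
      proof -
        have d: "drop (length w - 2) w = take 2 (drop (length w - 2) w)" by simp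
        have "drop (length w - 2) w \<in> I" using allI'[of "length w - 2"] len w d by simp
        moreover have "last (drop (length w - 2) w) = a (Suc n)"
          using len w xs lasteq[OF sx xs(1), of "Suc n"] by (simp add: last_drop)
        ultimately show ?thesis unfolding E_def by simp
      qed
      moreover have "set w \<subseteq> V" unfolding V_def w using sx by auto
      moreover have "\<forall>j. 1 \<le> j \<and> j \<le> length w - 2 - 1 \<longrightarrow> take 2 (drop j w) \<in> I"
        using allI' w len by auto
      ultimately show "w \<in> slt V 2 B I E {}" unfolding slt_def using len w by auto
    qed
  next
    show "slt V 2 B I E {} \<subseteq> L9 a n"
    proof
      fix w assume "w \<in> slt V 2 B I E {}"
      then have sw: "set w \<subseteq> V" and len: "length w \<ge> 2" and tB: "take 2 w \<in> B"
        and mid: "\<forall>j. 1 \<le> j \<and> j \<le> length w - 2 - 1 \<longrightarrow> take 2 (drop j w) \<in> I"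
        and dE: "drop (length w - 2) w \<in> E"
        unfolding slt_def by auto
      define xs where "xs = map (inv_into {1..n+1} a) w"
      have w: "w = map a xs" unfolding xs_def using sw
        by (auto simp: V_def f_inv_into_f intro!: map_idI[symmetric])
      have sx: "set xs \<subseteq> {1..n+1}"
      proof
        fix y assume "y \<in> set xs"
        then obtain z where "z \<in> set w" "y = inv_into {1..n+1} a z" unfolding xs_def by auto
        then show "y \<in> {1..n+1}" using sw unfolding V_def by (metis inv_into_into subsetD)
      qed
      have ne: "xs \<noteq> []" using len w by auto
      have lx: "length xs = length w" using w by simp
      have allI': "take 2 (drop j w) \<in> I" if "Suc j < length w" for j
      proof (cases "j = 0")
        case True then show ?thesis using tB by (simp add: B_def)
      next
        case False
        show ?thesis
        proof (cases "j = length w - 2")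
          case True
          have "take 2 (drop (length w - 2) w) = drop (length w - 2) w" by simp
          then show ?thesis using True dE by (simp add: E_def)
        next
          case False2: False
          have "1 \<le> j \<and> j \<le> length w - 2 - 1" using False False2 that by linarith
          then show ?thesis using mid by blast
        qed
      qed
      have "\<forall>i. Suc i < length xs \<longrightarrow> stp (xs ! i) (xs ! Suc i)"
      proof (intro allI impI)
        fix i assume i: "Suc i < length xs"
        have "Suc i < length w" using i lx by linarith
        then have "take 2 (drop i w) \<in> I" by (rule allI')
        then have "take 2 (drop i (map a xs)) \<in> I" unfolding w .
        then show "stp (xs ! i) (xs ! Suc i)" using pairI[OF sx i] by simp
      qed
      then have "successively stp xs" unfolding successively_conv_nth .
      moreover have "hd xs = 1"
      proof -
        have "hd (take 2 w) = a 1" using tB by (simp add: B_def)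
        then have "hd w = a 1" using len by (cases w) auto
        then show ?thesis using hdeq[OF sx ne, of 1] w by simp
      qed
      moreover have "last xs = Suc n"
      proof -
        have "last (drop (length w - 2) w) = a (Suc n)" using dE by (simp add: E_def)
        then have "last w = a (Suc n)" using len by (simp add: last_drop)
        then show ?thesis using lasteq[OF sx ne, of "Suc n"] w by simp
      qed
      ultimately show "w \<in> L9 a n" unfolding L9_char using ne w by blast
    qed
  qed
  have BV: "B \<subseteq> kwords V 2" and EV: "E \<subseteq> kwords V 2" using IV unfolding B_def E_def by auto
  have FV: "({}::'a list set) \<subseteq> {w. set w \<subseteq> V \<and> length w \<le> 2 - 1}" by simp
  have "L9 a n \<in> SLT V 2" unfolding SLT_def
    by (rule CollectI, rule exI[of _ B], rule exI[of _ I], rule exI[of _ E], rule exI[of _ "{}"])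
       (intro conjI BV IV EV FV eqL)
  then show ?thesis unfolding V_def .
qed

theorem mainTheorem20:
  fixes n :: nat and a :: "nat \<Rightarrow> 'a"
  assumes "n \<ge> 1" and "inj_on a {1..n+1}"
  shows "L9 a n \<in> SLT (a ` {1..n+1}) 2 - RL_Var n"
  using is_SLT[OF assms] not_RL[OF assms] by blast

end
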